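(* If $i:A\to B$ is a seminormalization of a monoid $A$ and $f:A\to C$ is any monoid map with $C$ seminormal, then there is a unique monoid map $g:B\to C$ with $g\circ i=f$. In particular, a seminormalization of a monoid is unique up to unique isomorphism.
   Context: A monoid is a pointed commutative monoid (basepoint $0$ with $0\cdot a=0$, identity $1$); maps preserve $0$, $1$, multiplication. $A$ is reduced if $a^2=b^2$ and $a^3=b^3$ imply $a=b$; $A_{\mathrm{red}}$ is the quotient of $A$ by the congruence $a\sim b$ iff $a^n=b^n$ for all $n\gg0$. $A$ is seminormal if it is reduced and whenever $x^3=y^2$ there is $z\in A$ with $x=z^2$, $y=z^3$. A seminormalization of $A$ is a map $A\to B$ with $B$ seminormal such that $A_{\mathrm{red}}\to B$ is injective and for every $b\in B$, $b^n\in A_{\mathrm{red}}$ for all $n\gg0$. *)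

theory Defs
  imports Main
begin

text \<open>Pointed commutative monoids: commutative monoid (identity 1) with an absorbing
basepoint 0. Each monoid is modelled as a type of this class.\<close>
class pcmonoid = comm_monoid_mult + mult_zero

definition monoid_map :: "('a::pcmonoid \<Rightarrow> 'b::pcmonoid) \<Rightarrow> bool" where
  "monoid_map f \<longleftrightarrow> f 0 = 0 \<and> f 1 = 1 \<and> (\<forall>a b. f (a * b) = f a * f b)"

definition reduced :: "'a::pcmonoid itself \<Rightarrow> bool" where
  "reduced _ \<longleftrightarrow> (\<forall>a b :: 'a. a ^ 2 = b ^ 2 \<and> a ^ 3 = b ^ 3 \<longrightarrow> a = b)"

definition seminormal :: "'a::pcmonoid itself \<Rightarrow> bool" where
  "seminormal T \<longleftrightarrow> reduced T \<and>
     (\<forall>x y :: 'a. x ^ 3 = y ^ 2 \<longrightarrow> (\<exists>z. x = z ^ 2 \<and> y = z ^ 3))"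

text \<open>The congruence defining A_red: a ~ b iff a^n = b^n for all n >> 0.\<close>
definition red_equiv :: "'a::pcmonoid \<Rightarrow> 'a \<Rightarrow> bool" where
  "red_equiv a b \<longleftrightarrow> (\<exists>N. \<forall>n\<ge>N. a ^ n = b ^ n)"

text \<open>Seminormalization i : A -> B. Injectivity of A_red -> B means i a = i b only if
a ~ b; the image of A_red in B is the image of i.\<close>
definition seminormalization :: "('a::pcmonoid \<Rightarrow> 'b::pcmonoid) \<Rightarrow> bool" where
  "seminormalization i \<longleftrightarrow> monoid_map i \<and> seminormal TYPE('b) \<and>
     (\<forall>a b. i a = i b \<longrightarrow> red_equiv a b) \<and>
     (\<forall>b. \<exists>N. \<forall>n\<ge>N. b ^ n \<in> range i)"

end

theory Submission
  imports Defs
begin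

lemma zpow: "n \<ge> 1 \<Longrightarrow> (0::'a::pcmonoid) ^ n = 0"
  by (cases n) simp_all

lemma mm_pow: "monoid_map f \<Longrightarrow> f (a ^ n) = f a ^ n"
  by (induction n) (auto simp: monoid_map_def)

lemma red_step:
  assumes r: "reduced TYPE('a::pcmonoid)" and h: "\<forall>n\<ge>Suc (Suc k). (a::'a) ^ n = b ^ n"
  shows "\<forall>n\<ge>Suc k. a ^ n = b ^ n"
proof (intro allI impI)
  fix n assume n: "n \<ge> Suc k"
  show "a ^ n = b ^ n"
  proof (cases "n = Suc k")
    case True
    have "(a ^ n) ^ 2 = a ^ (n*2)" "(b ^ n) ^ 2 = b ^ (n*2)"
      "(a ^ n) ^ 3 = a ^ (n*3)" "(b ^ n) ^ 3 = b ^ (n*3)" by (simp_all only: power_mult)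
    moreover have "n*2 \<ge> Suc (Suc k)" "n*3 \<ge> Suc (Suc k)" using True by simp_all
    ultimately have "(a ^ n) ^ 2 = (b ^ n) ^ 2" "(a ^ n) ^ 3 = (b ^ n) ^ 3" using h by simp_all
    thus ?thesis using r unfolding reduced_def by blast
  next
    case False thus ?thesis using h n by simp
  qed
qed

lemma red_down:
  assumes r: "reduced TYPE('a::pcmonoid)"
  shows "\<forall>n\<ge>Suc k. (a::'a) ^ n = b ^ n \<Longrightarrow> \<forall>n\<ge>Suc 0. a ^ n = b ^ n"
proof (induction k)
  case 0 thus ?case by simp
next
  case (Suc k) thus ?case using red_step[OF r, of k a b] by blast
qed

lemma red_eq:
  assumes r: "reduced TYPE('a::pcmonoid)" and "red_equiv (a::'a) b"
  shows "a = b"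
proof -
  obtain N where N: "\<forall>n\<ge>N. a ^ n = b ^ n" using assms(2) unfolding red_equiv_def by blast
  have h: "\<forall>n\<ge>Suc N. a ^ n = b ^ n"
  proof (intro allI impI)
    fix n assume "Suc N \<le> n" thus "a ^ n = b ^ n" using N by simp
  qed
  have "a ^ Suc 0 = b ^ Suc 0" using red_down[OF r h] by (metis order_refl)
  thus ?thesis by simp
qed

lemma map_red: "monoid_map f \<Longrightarrow> red_equiv a b \<Longrightarrow> red_equiv (f a) (f b)"
  unfolding red_equiv_def by (metis mm_pow)

definition addv :: "(nat \<Rightarrow> 'a::pcmonoid) \<Rightarrow> nat \<Rightarrow> bool" where
  "addv y M \<longleftrightarrow> (\<forall>n\<ge>M. \<forall>m\<ge>M. y n * y m = y (n + m))"

lemma addv_sq: "addv y M \<Longrightarrow> n \<ge> M \<Longrightarrow> y n ^ 2 = y (2 * n)"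
  unfolding addv_def by (simp add: power2_eq_square mult_2)

lemma addv_cube: "addv y M \<Longrightarrow> n \<ge> M \<Longrightarrow> y n ^ 3 = y (3 * n)"
proof -
  assume a: "addv y M" "n \<ge> M"
  have "y n ^ 3 = (y n * y n) * y n" by (simp add: power3_eq_cube)
  also have "\<dots> = y (n + n) * y n" using a unfolding addv_def by simp
  also have "\<dots> = y (n + n + n)" using a unfolding addv_def by simp
  finally show ?thesis by (simp add: numeral_3_eq_3 add.assoc)
qed

lemma sn_step:
  assumes s: "seminormal TYPE('c::pcmonoid)" and y: "addv (y :: nat \<Rightarrow> 'c) (Suc (Suc k))"
  shows "\<exists>y'. (\<forall>n\<ge>Suc (Suc k). y' n = y n) \<and> addv y' (Suc k)"
proof -
  define m where "m = Suc k"
  have r: "reduced TYPE('c)" using s unfolding seminormal_def by blast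
  have mge: "2 * m \<ge> Suc (Suc k)" "3 * m \<ge> Suc (Suc k)" unfolding m_def by auto
  have "y (2*m) ^ 3 = y (3 * (2*m))" using addv_cube[OF y mge(1)] .
  also have "\<dots> = y (2 * (3*m))" by (simp add: ac_simps)
  also have "\<dots> = y (3*m) ^ 2" using addv_sq[OF y mge(2)] by simp
  finally obtain z where z: "y (2*m) = z ^ 2" "y (3*m) = z ^ 3"
    using s unfolding seminormal_def by blast
  define y' where "y' = y(m := z)"
  have key: "z * y n = y (n + m)" if n: "n \<ge> Suc (Suc k)" for n
  proof -
    have n2: "n + m \<ge> Suc (Suc k)" using n by simp
    have "(z * y n) ^ 2 = z^2 * y n ^ 2" by (simp add: power_mult_distrib)
    also have "\<dots> = y (2*m) * y (2*n)" using z addv_sq[OF y n] by simp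
    also have "\<dots> = y (2*m + 2*n)" using y mge n unfolding addv_def by simp
    also have "\<dots> = y (n+m) ^ 2" using addv_sq[OF y n2] by (simp add: algebra_simps)
    finally have e2: "(z * y n) ^ 2 = y (n+m) ^ 2" .
    have "(z * y n) ^ 3 = z^3 * y n ^ 3" by (simp add: power_mult_distrib)
    also have "\<dots> = y (3*m) * y (3*n)" using z addv_cube[OF y n] by simp
    also have "\<dots> = y (3*m + 3*n)" using y mge n unfolding addv_def by simp
    also have "\<dots> = y (n+m) ^ 3" using addv_cube[OF y n2] by (simp add: algebra_simps)
    finally have e3: "(z * y n) ^ 3 = y (n+m) ^ 3" .
    show ?thesis using r e2 e3 unfolding reduced_def by blast
  qed
  have "addv y' (Suc k)"
    unfolding addv_def
  proof (intro allI impI)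
    fix n n' assume n: "n \<ge> Suc k" and n': "n' \<ge> Suc k"
    have big: "n + n' \<noteq> m" using n n' unfolding m_def by simp
    show "y' n * y' n' = y' (n + n')"
    proof (cases "n = m")
      case True
      show ?thesis
      proof (cases "n' = m")
        case True
        thus ?thesis using \<open>n = m\<close> z big by (simp add: y'_def power2_eq_square mult_2)
      next
        case False
        hence "n' \<ge> Suc (Suc k)" using n' m_def by simp
        thus ?thesis using key \<open>n = m\<close> False big by (simp add: y'_def add.commute)
      qed
    next
      case False
      hence nb: "n \<ge> Suc (Suc k)" using n m_def by simp
      show ?thesis
      proof (cases "n' = m")
        case True
        thus ?thesis using key[OF nb] False big by (simp add: y'_def mult.commute)
      next
        case False
        hence "n' \<ge> Suc (Suc k)" using n' m_def by simp
        thus ?thesis using nb y False \<open>n \<noteq> m\<close> big unfolding addv_def y'_def by simp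
      qed
    qed
  qed
  moreover have "\<forall>n\<ge>Suc (Suc k). y' n = y n" unfolding y'_def m_def by simp
  ultimately show ?thesis by (intro exI[of _ y'] conjI)
qed

lemma sn_down:
  assumes s: "seminormal TYPE('c::pcmonoid)"
  shows "addv (y :: nat \<Rightarrow> 'c) (Suc k) \<Longrightarrow> \<exists>y'. (\<forall>n\<ge>Suc k. y' n = y n) \<and> addv y' (Suc 0)"
proof (induction k arbitrary: y)
  case 0 thus ?case by blast
next
  case (Suc k)
  obtain y1 where y1: "\<forall>n\<ge>Suc (Suc k). y1 n = y n" "addv y1 (Suc k)"
    using sn_step[OF s Suc.prems] by blast
  obtain y2 where y2: "\<forall>n\<ge>Suc k. y2 n = y1 n" "addv y2 (Suc 0)" using Suc.IH[OF y1(2)] by blast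
  show ?case
  proof (intro exI[of _ y2] conjI allI impI)
    fix n :: nat assume "n \<ge> Suc (Suc k)" thus "y2 n = y n" using y1(1) y2(1) by simp
  qed (rule y2(2))
qed

lemma addv_pow: "addv y (Suc 0) \<Longrightarrow> n \<ge> 1 \<Longrightarrow> y 1 ^ n = y n"
proof (induction n)
  case 0 thus ?case by simp
next
  case (Suc n)
  show ?case
  proof (cases "n = 0")
    case True thus ?thesis by simp
  next
    case False
    hence "y 1 ^ Suc n = y 1 * y n" using Suc by simp
    also have "\<dots> = y (Suc n)" using Suc.prems False unfolding addv_def by simp
    finally show ?thesis .
  qed
qed

lemma univ:
  fixes i :: "'a::pcmonoid \<Rightarrow> 'b::pcmonoid" and f :: "'a \<Rightarrow> 'c::pcmonoid"
  assumes si: "seminormalization i" and mf: "monoid_map f" and sc: "seminormal TYPE('c)"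
  shows "\<exists>!g :: 'b \<Rightarrow> 'c. monoid_map g \<and> g \<circ> i = f"
proof -
  have mi: "monoid_map i" using si unfolding seminormalization_def by blast
  have inj: "\<And>a b. i a = i b \<Longrightarrow> red_equiv a b" using si unfolding seminormalization_def by blast
  have rng: "\<And>b. \<exists>N. \<forall>n\<ge>N. b ^ n \<in> range i" using si unfolding seminormalization_def by blast
  have rc: "reduced TYPE('c)" using sc unfolding seminormal_def by blast
  have resp: "f a = f a'" if "i a = i a'" for a a'
    using red_eq[OF rc map_red[OF mf inj[OF that]]] .
  define W where "W b c \<longleftrightarrow> (\<exists>N. \<forall>n\<ge>N. \<forall>a. b ^ n = i a \<longrightarrow> c ^ n = f a)" for b c
  have W1: "c = c'" if h1: "W b c" and h2: "W b c'" for b c c'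
  proof -
    obtain N1 where 1: "\<forall>n\<ge>N1. \<forall>a. b ^ n = i a \<longrightarrow> c ^ n = f a" using h1 unfolding W_def by blast
    obtain N2 where 2: "\<forall>n\<ge>N2. \<forall>a. b ^ n = i a \<longrightarrow> c' ^ n = f a" using h2 unfolding W_def by blast
    obtain N3 where 3: "\<forall>n\<ge>N3. b ^ n \<in> range i" using rng by blast
    have "\<forall>n\<ge>max N1 (max N2 N3). c ^ n = c' ^ n"
    proof (intro allI impI)
      fix n assume "n \<ge> max N1 (max N2 N3)"
      then obtain a where "b ^ n = i a" using 3 by force
      thus "c ^ n = c' ^ n" using 1 2 \<open>n \<ge> _\<close> by simp
    qed
    thus ?thesis using red_eq[OF rc] unfolding red_equiv_def by blast
  qed
  have W2: "\<exists>c. W b c" for b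
  proof -
    obtain N0 where N0: "\<forall>n\<ge>N0. b ^ n \<in> range i" using rng by blast
    define an where "an n = (SOME a. i a = b ^ n)" for n
    have ian: "i (an n) = b ^ n" if "n \<ge> N0" for n
      unfolding an_def using N0 that by (metis (mono_tags) rangeE someI_ex)
    define y where "y n = f (an n)" for n
    have "addv y (Suc N0)" unfolding addv_def
    proof (intro allI impI)
      fix n m assume "n \<ge> Suc N0" "m \<ge> Suc N0"
      hence "i (an n * an m) = i (an (n + m))" using ian mi
        by (simp add: monoid_map_def power_add)
      hence "f (an n * an m) = f (an (n+m))" by (rule resp)
      thus "y n * y m = y (n + m)" using mf by (simp add: y_def monoid_map_def)
    qed
    then obtain y' where y': "\<forall>n\<ge>Suc N0. y' n = y n" "addv y' (Suc 0)"
      using sn_down[OF sc] by blast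
    have "W b (y' 1)" unfolding W_def
    proof (intro exI[of _ "Suc N0"] allI impI)
      fix n a assume n: "n \<ge> Suc N0" and a: "b ^ n = i a"
      have "y' 1 ^ n = y' n" using addv_pow[OF y'(2)] n by simp
      also have "\<dots> = f (an n)" using y' n y_def by simp
      also have "\<dots> = f a" by (rule resp) (use ian[of n] n a in simp)
      finally show "y' 1 ^ n = f a" .
    qed
    thus ?thesis by blast
  qed
  define g where "g b = (SOME c. W b c)" for b
  have Wg: "W b (g b)" for b unfolding g_def using W2 someI_ex by metis
  have Wh: "W b (h b)" if "monoid_map h" "h \<circ> i = f" for h b
    unfolding W_def using that
    by (intro exI[of _ 0]) (auto simp: mm_pow[symmetric] fun_eq_iff)
  have gi: "g \<circ> i = f"
  proof
    fix a
    have "W (i a) (f a)" unfolding W_def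
      using mm_pow[OF mi] mm_pow[OF mf] resp by (metis)
    thus "(g \<circ> i) a = f a" using W1 Wg by auto
  qed
  have mg: "monoid_map g" unfolding monoid_map_def
  proof (intro conjI allI)
    have "W 0 0" unfolding W_def
    proof (intro exI[of _ 1] allI impI)
      fix n a assume "n \<ge> (1::nat)" "(0::'b) ^ n = i a"
      moreover have "(0::'b) ^ n = 0" using zpow \<open>n \<ge> 1\<close> by blast
      ultimately have "i a = i 0" using mi by (simp add: monoid_map_def)
      hence "f a = f 0" by (rule resp)
      thus "(0::'c) ^ n = f a" using mf zpow[OF \<open>n \<ge> 1\<close>] by (simp add: monoid_map_def)
    qed
    thus "g 0 = 0" using W1 Wg by blast
    show "g 1 = 1" using gi mi mf unfolding monoid_map_def by (metis comp_apply)
  next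
    fix b b'
    obtain N1 where 1: "\<forall>n\<ge>N1. \<forall>a. b ^ n = i a \<longrightarrow> g b ^ n = f a" using Wg[of b] unfolding W_def by blast
    obtain N2 where 2: "\<forall>n\<ge>N2. \<forall>a. b' ^ n = i a \<longrightarrow> g b' ^ n = f a" using Wg[of b'] unfolding W_def by blast
    obtain N3 where 3: "\<forall>n\<ge>N3. b ^ n \<in> range i" using rng by blast
    obtain N4 where 4: "\<forall>n\<ge>N4. b' ^ n \<in> range i" using rng by blast
    have "W (b * b') (g b * g b')" unfolding W_def
    proof (intro exI[of _ "max (max N1 N2) (max N3 N4)"] allI impI)
      fix n a assume n: "n \<ge> max (max N1 N2) (max N3 N4)" and a: "(b * b') ^ n = i a"
      obtain a1 where a1: "b ^ n = i a1" using 3 n by force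
      obtain a2 where a2: "b' ^ n = i a2" using 4 n by force
      have "i a = i (a1 * a2)" using a a1 a2 mi by (simp add: monoid_map_def power_mult_distrib)
      hence "f a = f (a1 * a2)" by (rule resp)
      also have "\<dots> = f a1 * f a2" using mf by (simp add: monoid_map_def)
      also have "\<dots> = g b ^ n * g b' ^ n" using 1 2 a1 a2 n by simp
      finally show "(g b * g b') ^ n = f a" by (simp add: power_mult_distrib)
    qed
    thus "g (b * b') = g b * g b'" using W1 Wg by blast
  qed
  show ?thesis
  proof (rule ex1I[of _ g])
    show "monoid_map g \<and> g \<circ> i = f" using mg gi by blast
  next
    fix h assume "monoid_map h \<and> h \<circ> i = f"
    hence "W b (h b)" for b using Wh by blast
    thus "h = g" using W1 Wg by blast
  qed
qed

lemma mm_comp: "monoid_map g \<Longrightarrow> monoid_map h \<Longrightarrow> monoid_map (h \<circ> g)"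
  by (simp add: monoid_map_def)

lemma mm_id: "monoid_map id" by (simp add: monoid_map_def)

theorem lemma1p11:
  fixes i :: "'a::pcmonoid \<Rightarrow> 'b::pcmonoid" and f :: "'a \<Rightarrow> 'c::pcmonoid"
  assumes "seminormalization i" and "monoid_map f" and "seminormal TYPE('c)"
  shows "(\<exists>!g :: 'b \<Rightarrow> 'c. monoid_map g \<and> g \<circ> i = f) \<and>
         (\<forall>j :: 'a \<Rightarrow> 'd::pcmonoid. seminormalization j \<longrightarrow>
            (\<exists>!g :: 'b \<Rightarrow> 'd. monoid_map g \<and> bij g \<and> g \<circ> i = j))"
proof (intro conjI allI impI)
  show "\<exists>!g :: 'b \<Rightarrow> 'c. monoid_map g \<and> g \<circ> i = f" using univ assms by blast
next
  fix j :: "'a \<Rightarrow> 'd::pcmonoid"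
  assume sj: "seminormalization j"
  have si: "seminormalization i" by fact
  have mi: "monoid_map i" and sb: "seminormal TYPE('b)" using si unfolding seminormalization_def by auto
  have mj: "monoid_map j" and sd: "seminormal TYPE('d)" using sj unfolding seminormalization_def by auto
  obtain g where g: "monoid_map g" "g \<circ> i = j" using univ[OF si mj sd] by blast
  obtain h where h: "monoid_map h" "h \<circ> j = i" using univ[OF sj mi sb] by blast
  have u1: "\<exists>!k :: 'b \<Rightarrow> 'b. monoid_map k \<and> k \<circ> i = i" using univ[OF si mi sb] .
  have u2: "\<exists>!k :: 'd \<Rightarrow> 'd. monoid_map k \<and> k \<circ> j = j" using univ[OF sj mj sd] .
  have "h \<circ> g = id"
    using u1 mm_comp[OF g(1) h(1)] mm_id g(2) h(2) by (metis comp_assoc id_comp)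
  moreover have "g \<circ> h = id"
    using u2 mm_comp[OF h(1) g(1)] mm_id g(2) h(2) by (metis comp_assoc id_comp)
  ultimately have "bij g" using o_bij by blast
  show "\<exists>!g :: 'b \<Rightarrow> 'd. monoid_map g \<and> bij g \<and> g \<circ> i = j"
  proof (rule ex1I[of _ g])
    show "monoid_map g \<and> bij g \<and> g \<circ> i = j" using g \<open>bij g\<close> by blast
  next
    fix g' assume "monoid_map g' \<and> bij g' \<and> g' \<circ> i = j"
    thus "g' = g" using univ[OF si mj sd] g by blast
  qed
qed

end
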